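(* Let $A(z)=\sum_{k=0}^{\infty}a_kz^k$ with $a_0\neq 0$ and $H(z)=\sum_{k=1}^{\infty}h_kz^k$ with $h_1\neq 0$ be analytic in a disk $|z|<R$ with $R>1$, with real coefficients. Let the Sheffer polynomials $p_k$ be defined by $A(t)e^{xH(t)}=\sum_{k=0}^{\infty}p_k(x)t^k$ for $|t|<R$, and assume $p_k(x)\ge 0$ for all $x\ge 0$ and all $k$, $A(1)\neq 0$ and $H'(1)=1$. Let $(b_n)$ be a positive increasing sequence with $b_n\to\infty$ and $b_n/n\to 0$, and define $$T_n^*(f;x)=\frac{e^{-\frac{n}{b_n}xH(1)}}{A(1)}\sum_{k=0}^{\infty}p_k\Big(\frac{n}{b_n}x\Big)f\Big(\frac{k}{n}b_n\Big).$$ Let $a>0$. If $f\in C_E[0,\infty)$, then for every $x\in[0,a]$, $$|T_n^*(f;x)-f(x)|\le\Bigg\{1+\sqrt{\big(1+H''(1)\big)a+\frac{b_n}{n}\frac{A'(1)+A''(1)}{A(1)}}\Bigg\}\,\omega\Big(f,\sqrt{\tfrac{b_n}{n}}\Big).$$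
   Context: $C_E[0,\infty)$ denotes the set of continuous functions $f$ on $[0,\infty)$ such that $|f(x)|\le \beta e^{\alpha x}$ for all $x\ge 0$, for some finite positive constants $\alpha,\beta$. For $\delta>0$, $\omega(f,\delta)=\sup\{|f(x)-f(y)|: x,y\in[0,\infty),\ |x-y|\le\delta\}$ is the modulus of continuity of $f$. *)

theory Defs
  imports "HOL-Analysis.Analysis"
begin

definition C_E :: "(real \<Rightarrow> real) \<Rightarrow> bool" where
  "C_E f \<longleftrightarrow> continuous_on {0..} f \<and>
     (\<exists>\<alpha> \<beta>. \<alpha> > 0 \<and> \<beta> > 0 \<and> (\<forall>x\<ge>0. \<bar>f x\<bar> \<le> \<beta> * exp (\<alpha> * x)))"

definition modulus :: "(real \<Rightarrow> real) \<Rightarrow> real \<Rightarrow> ereal" where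
  "modulus f \<delta> = (SUP xy \<in> {(x, y). x \<ge> 0 \<and> y \<ge> 0 \<and> \<bar>x - y\<bar> \<le> \<delta>}.
                     ereal \<bar>f (fst xy) - f (snd xy)\<bar>)"

definition T_star ::
  "(real \<Rightarrow> real) \<Rightarrow> (real \<Rightarrow> real) \<Rightarrow> (nat \<Rightarrow> real \<Rightarrow> real) \<Rightarrow> (nat \<Rightarrow> real)
   \<Rightarrow> nat \<Rightarrow> (real \<Rightarrow> real) \<Rightarrow> real \<Rightarrow> real" where
  "T_star A H p b n f x =
     exp (- (real n / b n) * x * H 1) / A 1 *
     (\<Sum>k. p k (real n / b n * x) * f (real k / real n * b n))"

end

theory Submission
  imports Defs
begin

lemma ps_facts:
  fixes c :: "nat \<Rightarrow> real" and F :: "real \<Rightarrow> real"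
  assumes R: "R > 1" and S: "\<And>t. \<bar>t\<bar> < R \<Longrightarrow> (\<lambda>k. c k * t ^ k) sums F t"
  shows "\<And>t. \<bar>t\<bar> < R \<Longrightarrow> (F has_real_derivative deriv F t) (at t)"
    and "(deriv F has_real_derivative deriv (deriv F) 1) (at 1)"
    and "(\<lambda>k. c k) sums F 1"
    and "(\<lambda>k. real k * c k) sums deriv F 1"
    and "(\<lambda>k. real k * (real k - 1) * c k) sums deriv (deriv F) 1"
proof -
  define B where "B = {-R<..<R}"
  have oB: "open B" unfolding B_def by simp
  have inB: "t \<in> B \<longleftrightarrow> \<bar>t\<bar> < R" for t unfolding B_def by auto
  have sm: "\<And>t. norm t < R \<Longrightarrow> summable (\<lambda>k. c k * t ^ k)"
    using S sums_summable by fastforce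
  have sm1: "\<And>t. norm t < R \<Longrightarrow> summable (\<lambda>k. diffs c k * t ^ k)"
    using termdiff_converges[OF _ sm] by blast
  have sm2: "\<And>t. norm t < R \<Longrightarrow> summable (\<lambda>k. diffs (diffs c) k * t ^ k)"
    using termdiff_converges[OF _ sm1] by blast
  have Feq: "F t = (\<Sum>k. c k * t ^ k)" if "t \<in> B" for t
    using S[of t] that inB sums_unique by metis
  have D1: "(F has_real_derivative (\<Sum>k. diffs c k * t ^ k)) (at t)" if "\<bar>t\<bar> < R" for t
  proof -
    have "((\<lambda>z. \<Sum>k. c k * z ^ k) has_real_derivative (\<Sum>k. diffs c k * t ^ k)) (at t)"
      using termdiffs_strong'[OF sm] that by auto
    then show ?thesis
      by (rule has_field_derivative_transform_within_open[OF _ oB]) (use that inB Feq in auto)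
  qed
  have dF: "deriv F t = (\<Sum>k. diffs c k * t ^ k)" if "t \<in> B" for t
    using D1 that inB DERIV_imp_deriv by blast
  show "\<And>t. \<bar>t\<bar> < R \<Longrightarrow> (F has_real_derivative deriv F t) (at t)"
    using D1 dF inB by auto
  have D2: "(deriv F has_real_derivative (\<Sum>k. diffs (diffs c) k * 1 ^ k)) (at 1)"
  proof -
    have "((\<lambda>z. \<Sum>k. diffs c k * z ^ k) has_real_derivative (\<Sum>k. diffs (diffs c) k * 1 ^ k)) (at 1)"
      using termdiffs_strong'[of R "diffs c" 1, OF sm1] R by simp
    then show ?thesis
      by (rule has_field_derivative_transform_within_open[OF _ oB]) (use R inB dF in auto)
  qed
  have ddF: "deriv (deriv F) 1 = (\<Sum>k. diffs (diffs c) k * 1 ^ k)"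
    using D2 DERIV_imp_deriv by blast
  show "(deriv F has_real_derivative deriv (deriv F) 1) (at 1)" using D2 ddF by simp
  show "(\<lambda>k. c k) sums F 1" using S[of 1] R by simp
  have "(\<lambda>k. diffs c k) sums deriv F 1"
    using sm1[of 1] R dF[of 1] inB[of 1] by (simp add: summable_sums)
  then have "(\<lambda>k. real (Suc k) * c (Suc k)) sums deriv F 1" by (simp add: diffs_def)
  then show "(\<lambda>k. real k * c k) sums deriv F 1"
    using sums_Suc_iff[of "\<lambda>k. real k * c k"] by simp
  have "(\<lambda>k. diffs (diffs c) k) sums deriv (deriv F) 1"
    using sm2[of 1] R ddF by (simp add: summable_sums)
  then have "(\<lambda>k. real (Suc (Suc k)) * (real (Suc (Suc k)) - 1) * c (Suc (Suc k))) sums deriv (deriv F) 1"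
    by (simp add: diffs_def algebra_simps)
  then have "(\<lambda>k. real (Suc k) * (real (Suc k) - 1) * c (Suc k)) sums deriv (deriv F) 1"
    using sums_Suc_iff[of "\<lambda>k. real (Suc k) * (real (Suc k) - 1) * c (Suc k)"] by simp
  then show "(\<lambda>k. real k * (real k - 1) * c k) sums deriv (deriv F) 1"
    using sums_Suc_iff[of "\<lambda>k. real k * (real k - 1) * c k"] by simp
qed

lemma G_sums:
  fixes A H :: "real \<Rightarrow> real" and w :: "nat \<Rightarrow> real" and u R :: real
  assumes R: "R > 1"
    and dA: "\<And>t. \<bar>t\<bar> < R \<Longrightarrow> (A has_real_derivative deriv A t) (at t)"
    and ddA: "(deriv A has_real_derivative deriv (deriv A) 1) (at 1)"
    and dH: "\<And>t. \<bar>t\<bar> < R \<Longrightarrow> (H has_real_derivative deriv H t) (at t)"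
    and ddH: "(deriv H has_real_derivative deriv (deriv H) 1) (at 1)"
    and H1: "deriv H 1 = 1"
    and gen: "\<And>t. \<bar>t\<bar> < R \<Longrightarrow> (\<lambda>k. w k * t ^ k) sums (A t * exp (u * H t))"
  shows "w sums (A 1 * exp (u * H 1))"
    and "(\<lambda>k. real k * w k) sums (exp (u * H 1) * (deriv A 1 + A 1 * u))"
    and "(\<lambda>k. real k * (real k - 1) * w k) sums (exp (u * H 1) *
           (deriv (deriv A) 1 + 2 * deriv A 1 * u + A 1 * u * deriv (deriv H) 1 + A 1 * u^2))"
proof -
  define G where "G = (\<lambda>t. A t * exp (u * H t))"
  have genG: "\<And>t. \<bar>t\<bar> < R \<Longrightarrow> (\<lambda>k. w k * t ^ k) sums G t" using gen by (simp add: G_def)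
  note P = ps_facts[of R w G, OF R genG]
  define B where "B = {-R<..<R}"
  have oB: "open B" unfolding B_def by simp
  have inB: "t \<in> B \<longleftrightarrow> \<bar>t\<bar> < R" for t unfolding B_def by auto
  define \<Phi> where "\<Phi> = (\<lambda>t. deriv A t * exp (u * H t) + A t * (exp (u * H t) * (u * deriv H t)))"
  have dG: "deriv G t = \<Phi> t" if "t \<in> B" for t
  proof -
    have "(G has_real_derivative \<Phi> t) (at t)"
      unfolding G_def \<Phi>_def
      using dA[of t] dH[of t] that inB
      by (auto intro!: derivative_eq_intros)
    then show ?thesis using DERIV_imp_deriv by blast
  qed
  have "(\<Phi> has_real_derivative (deriv (deriv A) 1 * exp (u * H 1) + deriv A 1 * (exp (u * H 1) * (u * deriv H 1))
        + (deriv A 1 * (exp (u * H 1) * (u * deriv H 1)) + A 1 * ((exp (u * H 1) * (u * deriv H 1)) * (u * deriv H 1)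
        + exp (u * H 1) * (u * deriv (deriv H) 1))))) (at 1)"
    unfolding \<Phi>_def
    using dA[of 1] dH[of 1] ddA ddH R
    by (auto intro!: derivative_eq_intros simp: algebra_simps)
  then have "(deriv G has_real_derivative (deriv (deriv A) 1 * exp (u * H 1) + deriv A 1 * (exp (u * H 1) * (u * deriv H 1))
        + (deriv A 1 * (exp (u * H 1) * (u * deriv H 1)) + A 1 * ((exp (u * H 1) * (u * deriv H 1)) * (u * deriv H 1)
        + exp (u * H 1) * (u * deriv (deriv H) 1))))) (at 1)"
    by (rule has_field_derivative_transform_within_open[OF _ oB]) (use R inB dG in auto)
  then have ddG: "deriv (deriv G) 1 = exp (u * H 1) *
           (deriv (deriv A) 1 + 2 * deriv A 1 * u + A 1 * u * deriv (deriv H) 1 + A 1 * u^2)"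
    using DERIV_imp_deriv H1 by (auto simp: algebra_simps power2_eq_square)
  have dG1: "deriv G 1 = exp (u * H 1) * (deriv A 1 + A 1 * u)"
    using dG[of 1] inB[of 1] R H1 by (simp add: \<Phi>_def algebra_simps)
  show "w sums (A 1 * exp (u * H 1))" using P(3) by (simp add: G_def)
  show "(\<lambda>k. real k * w k) sums (exp (u * H 1) * (deriv A 1 + A 1 * u))" using P(4) dG1 by simp
  show "(\<lambda>k. real k * (real k - 1) * w k) sums (exp (u * H 1) *
           (deriv (deriv A) 1 + 2 * deriv A 1 * u + A 1 * u * deriv (deriv H) 1 + A 1 * u^2))"
    using P(5) ddG by simp
qed

lemma mod_steps:
  fixes f :: "real \<Rightarrow> real"
  assumes d: "\<delta> > 0" and W: "\<And>s t. s \<ge> 0 \<Longrightarrow> t \<ge> 0 \<Longrightarrow> \<bar>s - t\<bar> \<le> \<delta> \<Longrightarrow> \<bar>f s - f t\<bar> \<le> W"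
  shows "\<And>s t. s \<ge> 0 \<Longrightarrow> t \<ge> 0 \<Longrightarrow> \<bar>s - t\<bar> \<le> real m * \<delta> \<Longrightarrow> \<bar>f s - f t\<bar> \<le> real m * W"
proof (induction m)
  case 0
  then show ?case by simp
next
  case (Suc m)
  have W0: "W \<ge> 0" using W[of 0 0] d by simp
  have key: "\<bar>f s - f t\<bar> \<le> real (Suc m) * W" if "s \<ge> 0" "t \<ge> 0" "s \<le> t" "t - s \<le> real (Suc m) * \<delta>" for s t
  proof (cases "t - s \<le> \<delta>")
    case True
    then have "\<bar>f s - f t\<bar> \<le> W" using W that by simp
    also have "W \<le> real (Suc m) * W"
    proof -
      have "0 \<le> real m * W" using W0 by simp
      then show ?thesis by (simp add: algebra_simps)
    qed
    finally show ?thesis .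
  next
    case False
    have a: "\<bar>f s - f (s + \<delta>)\<bar> \<le> W" using W[of s "s+\<delta>"] that d by simp
    have b: "\<bar>f (s + \<delta>) - f t\<bar> \<le> real m * W"
      using Suc.IH[of "s+\<delta>" t] that d False by (simp add: algebra_simps)
    have "\<bar>f s - f t\<bar> \<le> \<bar>f s - f (s + \<delta>)\<bar> + \<bar>f (s + \<delta>) - f t\<bar>" by simp
    also have "\<dots> \<le> real (Suc m) * W" using a b by (simp add: algebra_simps)
    finally show ?thesis .
  qed
  show ?case
  proof (cases "s \<le> t")
    case True then show ?thesis using key Suc.prems by simp
  next
    case False then show ?thesis using key[of t s] Suc.prems by (simp add: abs_minus_commute)
  qed
qed

lemma mod_bound:
  fixes f :: "real \<Rightarrow> real"
  assumes d: "\<delta> > 0" and W: "\<And>s t. s \<ge> 0 \<Longrightarrow> t \<ge> 0 \<Longrightarrow> \<bar>s - t\<bar> \<le> \<delta> \<Longrightarrow> \<bar>f s - f t\<bar> \<le> W"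
    and s: "s \<ge> 0" and t: "t \<ge> 0"
  shows "\<bar>f s - f t\<bar> \<le> (1 + \<bar>s - t\<bar> / \<delta>) * W"
proof -
  define m where "m = nat (ceiling (\<bar>s - t\<bar> / \<delta>))"
  have W0: "W \<ge> 0" using W[of 0 0] d by simp
  have m1: "real m \<ge> \<bar>s - t\<bar> / \<delta>" unfolding m_def by linarith
  have m2: "real m \<le> 1 + \<bar>s - t\<bar> / \<delta>"
  proof -
    have "0 \<le> \<bar>s - t\<bar> / \<delta>" using d by simp
    then have "ceiling (\<bar>s - t\<bar> / \<delta>) \<ge> 0" by simp
    then have "real m = of_int (ceiling (\<bar>s - t\<bar> / \<delta>))" unfolding m_def by simp
    then show ?thesis using of_int_ceiling_le_add_one[of "\<bar>s - t\<bar> / \<delta>"] by linarith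
  qed
  have hm: "\<bar>s - t\<bar> \<le> real m * \<delta>" using m1 d by (simp add: field_simps)
  have "\<bar>f s - f t\<bar> \<le> real m * W" using mod_steps[OF d W s t hm] .
  also have "\<dots> \<le> (1 + \<bar>s - t\<bar> / \<delta>) * W" using m2 W0 by (rule mult_right_mono)
  finally show ?thesis .
qed

lemma core:
  fixes w :: "nat \<Rightarrow> real" and f :: "real \<Rightarrow> real"
  assumes w0: "\<And>k. w k \<ge> 0" and wS: "w sums S0" and S0: "S0 > 0"
    and V: "(\<lambda>k. w k * (real k * \<beta> - x)^2 / \<beta>) sums (S0 * Q)"
    and \<beta>: "\<beta> > 0" and x: "x \<ge> 0"
    and W: "\<And>s t. s \<ge> 0 \<Longrightarrow> t \<ge> 0 \<Longrightarrow> \<bar>s - t\<bar> \<le> sqrt \<beta> \<Longrightarrow> \<bar>f s - f t\<bar> \<le> W"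
    and c0: "c0 > 0"
  shows "\<bar>(\<Sum>k. w k * f (real k * \<beta>)) / S0 - f x\<bar> \<le> W * (1 + c0 / 2 + Q / (2 * c0))"
proof -
  define \<delta> where "\<delta> = sqrt \<beta>"
  have d: "\<delta> > 0" using \<beta> by (simp add: \<delta>_def)
  have dd: "\<delta>^2 = \<beta>" using \<beta> by (simp add: \<delta>_def)
  have W0: "W \<ge> 0" using W[of 0 0] \<beta> by simp
  define g where "g k = w k * (f (real k * \<beta>) - f x)" for k
  define B where "B k = w k * (1 + c0/2) * W + (w k * (real k * \<beta> - x)^2 / \<beta>) * (W / (2 * c0))" for k
  have pt: "\<bar>g k\<bar> \<le> B k" for k
  proof -
    have kb: "real k * \<beta> \<ge> 0" using \<beta> by simp
    have m: "\<bar>f (real k * \<beta>) - f x\<bar> \<le> (1 + \<bar>real k * \<beta> - x\<bar> / \<delta>) * W"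
      using mod_bound[OF d W[unfolded \<delta>_def[symmetric]] kb x] .
    define y where "y = \<bar>real k * \<beta> - x\<bar> / \<delta>"
    have y2: "y^2 = (real k * \<beta> - x)^2 / \<beta>"
      unfolding y_def using dd by (simp add: power_divide)
    have amgm: "y \<le> c0/2 + y^2 / (2 * c0)"
    proof -
      have e: "c0/2 + y^2 / (2 * c0) - y = (c0 - y)^2 / (2 * c0)"
        using c0 by (simp add: field_simps power2_eq_square)
      have "0 \<le> (c0 - y)^2 / (2 * c0)" using c0 by simp
      then show ?thesis using e by linarith
    qed
    have "\<bar>f (real k * \<beta>) - f x\<bar> \<le> (1 + c0/2 + y^2/(2*c0)) * W"
    proof -
      have "(1 + y) * W \<le> (1 + c0/2 + y^2/(2*c0)) * W"
        by (rule mult_right_mono) (use amgm W0 in auto)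
      then show ?thesis using m unfolding y_def by linarith
    qed
    then have "w k * \<bar>f (real k * \<beta>) - f x\<bar> \<le> w k * ((1 + c0/2 + y^2/(2*c0)) * W)"
      using w0[of k] by (rule mult_left_mono)
    moreover have "\<bar>g k\<bar> = w k * \<bar>f (real k * \<beta>) - f x\<bar>"
      unfolding g_def using w0[of k] by (simp add: abs_mult)
    moreover have "B k = w k * ((1 + c0/2 + y^2/(2*c0)) * W)"
      unfolding B_def y2 by (simp add: algebra_simps)
    ultimately show ?thesis by simp
  qed
  have BS: "B sums (S0 * (1 + c0/2) * W + S0 * Q * (W / (2 * c0)))"
    unfolding B_def by (intro sums_add sums_mult2 wS V)
  have sB: "summable B" using BS by (rule sums_summable)
  have sg: "summable (\<lambda>k. \<bar>g k\<bar>)"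
    by (rule summable_rabs_comparison_test[OF _ sB]) (use pt in blast)
  then have sg': "summable g" using summable_rabs_cancel by blast
  have "\<bar>suminf g\<bar> \<le> (\<Sum>k. \<bar>g k\<bar>)" using summable_rabs[OF sg] .
  also have "\<dots> \<le> suminf B" using suminf_le[OF pt sg sB] .
  also have "\<dots> = S0 * (1 + c0/2) * W + S0 * Q * (W / (2 * c0))" using BS sums_unique by metis
  finally have gb: "\<bar>suminf g\<bar> \<le> S0 * (W * (1 + c0 / 2 + Q / (2 * c0)))"
    by (simp add: algebra_simps)
  have eqs: "(\<lambda>k. w k * f (real k * \<beta>)) = (\<lambda>k. g k + w k * f x)"
    unfolding g_def by (auto simp: algebra_simps)
  have "(\<lambda>k. g k + w k * f x) sums (suminf g + S0 * f x)"
    by (intro sums_add sums_mult2 wS summable_sums[OF sg'])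
  then have "(\<Sum>k. w k * f (real k * \<beta>)) = suminf g + S0 * f x"
    unfolding eqs using sums_unique by metis
  then have "(\<Sum>k. w k * f (real k * \<beta>)) / S0 - f x = suminf g / S0"
    using S0 by (simp add: add_divide_distrib)
  then have "\<bar>(\<Sum>k. w k * f (real k * \<beta>)) / S0 - f x\<bar> = \<bar>suminf g\<bar> / S0"
    using S0 by (simp add: abs_divide)
  also have "\<bar>suminf g\<bar> / S0 \<le> W * (1 + c0 / 2 + Q / (2 * c0))"
    using gb S0 by (subst pos_divide_le_eq[OF S0]) (simp add: mult.commute)
  finally show ?thesis .
qed


lemma var_sum:
  fixes w :: "nat \<Rightarrow> real"
  assumes "w sums S0" "(\<lambda>k. real k * w k) sums S1" "(\<lambda>k. real k * (real k - 1) * w k) sums S2"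
  shows "(\<lambda>k. w k * (real k - u)^2) sums (S2 + S1 * (1 - 2 * u) + S0 * u^2)"
proof -
  have "(\<lambda>k. real k * (real k - 1) * w k + real k * w k * (1 - 2 * u) + w k * u^2)
          sums (S2 + S1 * (1 - 2 * u) + S0 * u^2)"
    by (intro sums_add sums_mult2 assms)
  moreover have "(\<lambda>k. real k * (real k - 1) * w k + real k * w k * (1 - 2 * u) + w k * u^2)
          = (\<lambda>k. w k * (real k - u)^2)"
    by (auto simp: fun_eq_iff algebra_simps power2_eq_square)
  ultimately show ?thesis by simp
qed

theorem theorem2p6:
  fixes a h :: "nat \<Rightarrow> real" and A H :: "real \<Rightarrow> real" and R :: real
    and p :: "nat \<Rightarrow> real \<Rightarrow> real" and b :: "nat \<Rightarrow> real"
    and f :: "real \<Rightarrow> real" and aa x :: real and n :: nat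
  assumes R: "R > 1"
    and conv_a: "ereal R \<le> conv_radius a" and conv_h: "ereal R \<le> conv_radius h"
    and a0: "a 0 \<noteq> 0" and h0: "h 0 = 0" and h1: "h 1 \<noteq> 0"
    and A_def: "\<And>t. \<bar>t\<bar> < R \<Longrightarrow> (\<lambda>k. a k * t ^ k) sums A t"
    and H_def: "\<And>t. \<bar>t\<bar> < R \<Longrightarrow> (\<lambda>k. h k * t ^ k) sums H t"
    and p_gen: "\<And>x t. \<bar>t\<bar> < R \<Longrightarrow> (\<lambda>k. p k x * t ^ k) sums (A t * exp (x * H t))"
    and p_nonneg: "\<And>k x. x \<ge> 0 \<Longrightarrow> p k x \<ge> 0"
    and A1: "A 1 \<noteq> 0" and H'1: "deriv H 1 = 1"
    and b_pos: "\<And>n. b n > 0" and b_inc: "incseq b"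
    and b_inf: "filterlim b at_top sequentially"
    and b_o: "(\<lambda>n. b n / real n) \<longlonglongrightarrow> 0"
    and aa: "aa > 0"
    and f: "C_E f"
    and n: "n > 0"
    and x: "x \<in> {0..aa}"
  shows "ereal \<bar>T_star A H p b n f x - f x\<bar>
           \<le> ereal (1 + sqrt ((1 + deriv (deriv H) 1) * aa
                  + b n / real n * (deriv A 1 + deriv (deriv A) 1) / A 1))
             * modulus f (sqrt (b n / real n))"
proof -
  note PA = ps_facts[OF R A_def]
  note PH = ps_facts[OF R H_def]
  define A' where "A' = deriv A 1"
  define A'' where "A'' = deriv (deriv A) 1"
  define H'' where "H'' = deriv (deriv H) 1"
  have GS: "(\<lambda>k. p k u) sums (A 1 * exp (u * H 1))"
    "(\<lambda>k. real k * p k u) sums (exp (u * H 1) * (A' + A 1 * u))"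
    "(\<lambda>k. real k * (real k - 1) * p k u) sums (exp (u * H 1) *
           (A'' + 2 * A' * u + A 1 * u * H'' + A 1 * u^2))" for u
    using G_sums[of R A H "\<lambda>k. p k u" u, OF R PA(1) PA(2) PH(1) PH(2) H'1 p_gen]
    unfolding A'_def A''_def H''_def by auto
  have VS: "(\<lambda>k. p k u * (real k - u)^2) sums (exp (u * H 1) * (A'' + A' + A 1 * u * (1 + H'')))" for u
  proof -
    have "(\<lambda>k. p k u * (real k - u)^2) sums
      (exp (u * H 1) * (A'' + 2 * A' * u + A 1 * u * H'' + A 1 * u^2)
       + exp (u * H 1) * (A' + A 1 * u) * (1 - 2 * u) + A 1 * exp (u * H 1) * u^2)"
      by (rule var_sum[OF GS])
    moreover have "exp (u * H 1) * (A'' + 2 * A' * u + A 1 * u * H'' + A 1 * u^2)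
       + exp (u * H 1) * (A' + A 1 * u) * (1 - 2 * u) + A 1 * exp (u * H 1) * u^2
       = exp (u * H 1) * (A'' + A' + A 1 * u * (1 + H''))"
      by (simp add: algebra_simps power2_eq_square)
    ultimately show ?thesis by simp
  qed
  have A1pos: "A 1 > 0"
  proof -
    have "0 \<le> suminf (\<lambda>k. p k 0)"
      by (rule suminf_nonneg[OF sums_summable[OF GS(1)[of 0]]]) (rule p_nonneg, simp)
    moreover have "suminf (\<lambda>k. p k 0) = A 1 * exp (0 * H 1)" using GS(1)[of 0] by (rule sums_unique[symmetric])
    ultimately have "0 \<le> A 1" by simp
    then show ?thesis using A1 by simp
  qed
  have VNN: "0 \<le> A'' + A' + A 1 * u * (1 + H'')" if "u \<ge> 0" for u
  proof -
    have "0 \<le> (\<Sum>k. p k u * (real k - u)^2)"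
      by (rule suminf_nonneg[OF sums_summable[OF VS[of u]]]) (use p_nonneg[OF that] in simp)
    moreover have "(\<Sum>k. p k u * (real k - u)^2) = exp (u * H 1) * (A'' + A' + A 1 * u * (1 + H''))"
      using VS[of u] by (rule sums_unique[symmetric])
    ultimately have "0 \<le> exp (u * H 1) * (A'' + A' + A 1 * u * (1 + H''))" by simp
    then show ?thesis by (simp add: zero_le_mult_iff)
  qed
  have H''nn: "1 + H'' \<ge> 0"
  proof (rule ccontr)
    assume neg: "\<not> 1 + H'' \<ge> 0"
    define u where "u = (\<bar>A'' + A'\<bar> + 1) / (A 1 * (- (1 + H'')))"
    have u0: "u \<ge> 0" unfolding u_def using neg A1pos by simp
    have d: "A 1 * (- (1 + H'')) > 0" using neg A1pos by simp
    have e: "u * (A 1 * (- (1 + H''))) = \<bar>A'' + A'\<bar> + 1"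
      unfolding u_def using d by (metis less_irrefl nonzero_eq_divide_eq mult.commute)
    have "A 1 * u * (1 + H'') = - (u * (A 1 * (- (1 + H''))))" by (simp add: algebra_simps)
    then have "A 1 * u * (1 + H'') = - (\<bar>A'' + A'\<bar> + 1)" using e by simp
    then show False using VNN[OF u0] by linarith
  qed
  define \<beta> where "\<beta> = b n / real n"
  have \<beta>: "\<beta> > 0" unfolding \<beta>_def using b_pos[of n] n by simp
  define u where "u = real n / b n * x"
  have x0: "x \<ge> 0" "x \<le> aa" using x by auto
  have u0: "u \<ge> 0" unfolding u_def using x0 b_pos[of n] by simp
  have xu: "x = u * \<beta>" unfolding u_def \<beta>_def using b_pos[of n] n by simp
  define w where "w k = p k u" for k
  define S0 where "S0 = A 1 * exp (u * H 1)"
  have S0: "S0 > 0" unfolding S0_def using A1pos by simp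
  define Q where "Q = \<beta> * (A' + A'') / A 1 + x * (1 + H'')"
  have wS: "w sums S0" unfolding w_def S0_def using GS(1) .
  have w0: "w k \<ge> 0" for k unfolding w_def using p_nonneg u0 by simp
  have V: "(\<lambda>k. w k * (real k * \<beta> - x)^2 / \<beta>) sums (S0 * Q)"
  proof -
    have "(\<lambda>k. \<beta> * (p k u * (real k - u)^2)) sums (\<beta> * (exp (u * H 1) * (A'' + A' + A 1 * u * (1 + H''))))"
      by (intro sums_mult VS)
    moreover have "(\<lambda>k. \<beta> * (p k u * (real k - u)^2)) = (\<lambda>k. w k * (real k * \<beta> - x)^2 / \<beta>)"
    proof
      fix k
      have "(real k * \<beta> - u * \<beta>)^2 = \<beta> * \<beta> * (real k - u)^2"
        by (simp add: power2_eq_square algebra_simps)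
      then show "\<beta> * (p k u * (real k - u)^2) = w k * (real k * \<beta> - x)^2 / \<beta>"
        unfolding w_def xu using \<beta> by simp
    qed
    moreover have "\<beta> * (exp (u * H 1) * (A'' + A' + A 1 * u * (1 + H''))) = S0 * Q"
      unfolding S0_def Q_def xu using A1pos by (simp add: field_simps)
    ultimately show ?thesis by simp
  qed
  have Q0: "Q \<ge> 0"
  proof -
    have "0 \<le> (\<Sum>k. w k * (real k * \<beta> - x)^2 / \<beta>)"
      by (rule suminf_nonneg[OF sums_summable[OF V]]) (use w0 \<beta> in simp)
    moreover have "(\<Sum>k. w k * (real k * \<beta> - x)^2 / \<beta>) = S0 * Q" using V by (rule sums_unique[symmetric])
    ultimately have "0 \<le> S0 * Q" by simp
    then show ?thesis using S0 by (simp add: zero_le_mult_iff)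
  qed
  define M where "M = (1 + deriv (deriv H) 1) * aa + b n / real n * (deriv A 1 + deriv (deriv A) 1) / A 1"
  have QM: "Q \<le> M"
  proof -
    have "x * (1 + H'') \<le> aa * (1 + H'')" using x0 H''nn by (simp add: mult_right_mono)
    then show ?thesis unfolding Q_def M_def \<beta>_def A'_def A''_def H''_def by (simp add: algebra_simps)
  qed
  have T: "T_star A H p b n f x = (\<Sum>k. w k * f (real k * \<beta>)) / S0"
  proof -
    have "(\<lambda>k. p k (real n / b n * x) * f (real k / real n * b n)) = (\<lambda>k. w k * f (real k * \<beta>))"
      unfolding w_def u_def \<beta>_def by (simp add: fun_eq_iff)
    moreover have "exp (- (real n / b n) * x * H 1) / A 1 = 1 / S0"
      unfolding S0_def u_def by (simp add: exp_minus field_simps)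
    ultimately show ?thesis unfolding T_star_def by simp
  qed
  have mod_nn: "modulus f (sqrt \<beta>) \<ge> 0"
  proof -
    have "ereal \<bar>f (fst (0::real,0::real)) - f (snd (0::real,0::real))\<bar> \<le> modulus f (sqrt \<beta>)"
      unfolding modulus_def by (rule SUP_upper) (use \<beta> in auto)
    then show ?thesis by (simp add: zero_ereal_def)
  qed
  have K: "1 + sqrt M > 0"
  proof -
    have "sqrt M \<ge> 0" using QM Q0 by (intro real_sqrt_ge_zero) linarith
    then show ?thesis by linarith
  qed
  show ?thesis
  proof (cases "modulus f (sqrt \<beta>) = \<infinity>")
    case True
    have E: "ereal (1 + sqrt M) * modulus f (sqrt \<beta>) = \<infinity>" using True K by simp
    show ?thesis by (subst E[unfolded M_def \<beta>_def]) simp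
  next
    case False
    then obtain W where W: "modulus f (sqrt \<beta>) = ereal W" using mod_nn
      by (cases "modulus f (sqrt \<beta>)") auto
    have Wb: "\<bar>f s - f t\<bar> \<le> W" if "s \<ge> 0" "t \<ge> 0" "\<bar>s - t\<bar> \<le> sqrt \<beta>" for s t
    proof -
      have "ereal \<bar>f (fst (s,t)) - f (snd (s,t))\<bar> \<le> modulus f (sqrt \<beta>)"
        unfolding modulus_def by (rule SUP_upper) (use that in auto)
      then show ?thesis using W by simp
    qed
    have W0: "W \<ge> 0" using Wb[of 0 0] \<beta> by simp
    have C: "\<bar>T_star A H p b n f x - f x\<bar> \<le> W * (1 + c0 / 2 + Q / (2 * c0))" if "c0 > 0" for c0
      unfolding T using core[OF w0 wS S0 V \<beta> x0(1) Wb that] .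
    have real: "\<bar>T_star A H p b n f x - f x\<bar> \<le> (1 + sqrt M) * W"
    proof (cases "M > 0")
      case True
      have sM: "sqrt M > 0" using True by simp
      have "Q / (2 * sqrt M) \<le> M / (2 * sqrt M)" using QM sM by (simp add: divide_right_mono)
      also have "M / (2 * sqrt M) = sqrt M / 2"
      proof -
        have "M / sqrt M = sqrt M" using True by (simp add: real_div_sqrt)
        moreover have "M / (2 * sqrt M) = (M / sqrt M) / 2" by simp
        ultimately show ?thesis by simp
      qed
      finally have "1 + sqrt M / 2 + Q / (2 * sqrt M) \<le> 1 + sqrt M" by simp
      then have "W * (1 + sqrt M / 2 + Q / (2 * sqrt M)) \<le> W * (1 + sqrt M)"
        using W0 by (rule mult_left_mono)
      then show ?thesis using C[OF sM] by (simp add: mult.commute)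
    next
      case False
      then have M0: "M = 0" "Q = 0" using QM Q0 by auto
      show ?thesis
      proof (rule field_le_epsilon)
        fix e :: real assume e: "e > 0"
        define c0 where "c0 = 2 * e / (W + 1)"
        have c0: "c0 > 0" unfolding c0_def using e W0 by simp
        have "W * (1 + c0 / 2 + Q / (2 * c0)) = W + W * (e / (W + 1))"
          unfolding c0_def using M0 W0 by (simp add: field_simps)
        also have "W * (e / (W + 1)) \<le> e"
          using W0 e by (simp add: field_simps)
        finally have "W * (1 + c0 / 2 + Q / (2 * c0)) \<le> W + e" by simp
        then show "\<bar>T_star A H p b n f x - f x\<bar> \<le> (1 + sqrt M) * W + e"
          using C[OF c0] M0 by simp
      qed
    qed
    have RR: "ereal \<bar>T_star A H p b n f x - f x\<bar> \<le> ereal (1 + sqrt M) * modulus f (sqrt \<beta>)"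
      unfolding W using real by simp
    show ?thesis using RR unfolding M_def \<beta>_def .
  qed
qed

end
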